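(* Let $k\ge2$, $a>0$, $0<\theta<1$, $\lambda=a^k$, and $\gamma(u)=a(1+\theta)-u+\frac{u-a\theta}{1+u^k}$. Then $\gamma$ maps $[a\theta,a]$ into itself and has a unique fixed point $\xi\in(a\theta,a)$. Moreover $\gamma'(\xi)<-1$ holds if and only if $\theta<\frac{k-1}{k+1}$ and $\lambda>\frac{1}{k-1-(k+1)\theta}\bigl(\frac{k+1}{k}\bigr)^k$. *)

theory Defs
  imports "HOL-Analysis.Analysis"
begin

definition gam :: "nat \<Rightarrow> real \<Rightarrow> real \<Rightarrow> real \<Rightarrow> real" where
  "gam k a \<theta> u = a * (1 + \<theta>) - u + (u - a * \<theta>) / (1 + u ^ k)"

end

theory Submission
  imports Defs
begin

lemma gam_deriv:
  "((gam k a \<theta>) has_real_derivative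
     (-1 + ((1 + u^k) - (u - a*\<theta>) * (real k * u^(k-1))) / (1 + u^k)^2)) (at u)"
  if "u > 0"
proof -
  have d: "1 + u^k \<noteq> 0" using that by (smt (verit) zero_le_power)
  have "((\<lambda>u. a * (1 + \<theta>) - u + (u - a * \<theta>) / (1 + u ^ k)) has_real_derivative
     (-1 + ((1 + u^k) - (u - a*\<theta>) * (real k * u^(k-1))) / (1 + u^k)^2)) (at u)"
    using d by (auto intro!: derivative_eq_intros simp: field_simps power2_eq_square)
  then show ?thesis unfolding gam_def[abs_def] by simp
qed

lemma phi_mono:
  fixes x y \<theta> :: real
  assumes "0 < x" "x < y" "\<theta> < 1" "0 < \<theta>" "k > 0"
  shows "x * (1 + 2*x^k) / (1 + (1+\<theta>)*x^k) < y * (1 + 2*y^k) / (1 + (1+\<theta>)*y^k)"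
proof -
  define s where "s = x^k"
  define t where "t = y^k"
  have s0: "s > 0" using assms s_def by simp
  have st: "s < t" using assms unfolding s_def t_def by (simp add: power_strict_mono)
  have q: "(1 + 2* s) / (1 + (1+\<theta>)* s) \<le> (1 + 2* t) / (1 + (1+\<theta>)* t)"
  proof -
    have "(1 + 2* s) * (1 + (1+\<theta>)* t) \<le> (1 + 2* t) * (1 + (1+\<theta>)* s)"
    proof -
      have "(1 + 2* t) * (1 + (1+\<theta>)* s) - (1 + 2* s) * (1 + (1+\<theta>)* t) = (1-\<theta>)*(t-s)"
        by (simp add: algebra_simps)
      also have "\<dots> \<ge> 0" using st assms by simp
      finally show ?thesis by simp
    qed
    moreover have "1 + (1+\<theta>)* s > 0" "1 + (1+\<theta>)* t > 0" using s0 st assms by (smt (verit) mult_pos_pos)+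
    ultimately show ?thesis by (simp add: divide_le_eq le_divide_eq mult.commute)
  qed
  have p: "0 < (1 + 2* s) / (1 + (1+\<theta>)* s)" using s0 assms
    by (intro divide_pos_pos) (simp, smt (verit) mult_pos_pos)
  have "x * ((1 + 2* s) / (1 + (1+\<theta>)* s)) < y * ((1 + 2* s) / (1 + (1+\<theta>)* s))"
    using p assms by (intro mult_strict_right_mono) auto
  also have "\<dots> \<le> y * ((1 + 2* t) / (1 + (1+\<theta>)* t))" using q assms by (intro mult_left_mono) auto
  finally show ?thesis unfolding s_def t_def by simp
qed


lemma gam_range:
  assumes "a > 0" "0 < \<theta>" "\<theta> < 1" "u \<in> {a * \<theta>..a}"
  shows "gam k a \<theta> u \<in> {a * \<theta>..a}"
proof -
  have u: "a*\<theta> \<le> u" "u \<le> a" using assms by auto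
  have u0: "u > 0" using u assms by (smt (verit) mult_pos_pos)
  have d: "1 + u^k \<ge> 1" using u0 by simp
  have q0: "(u - a*\<theta>) / (1 + u^k) \<ge> 0" using u d by simp
  have q1: "(u - a*\<theta>) / (1 + u^k) \<le> u - a*\<theta>" using u d
    by (simp add: divide_le_eq) (smt (verit) mult_left_mono mult_cancel_left1)
  show ?thesis using q0 q1 u unfolding gam_def by (auto simp: algebra_simps)
qed

lemma gam_decr:
  assumes "a > 0" "0 < \<theta>" "a*\<theta> \<le> x" "x < y"
  shows "gam k a \<theta> y - y < gam k a \<theta> x - x"
proof -
  have x0: "x > 0" using assms by (smt (verit) mult_pos_pos)
  have dx: "1 + x^k \<ge> 1" using x0 by simp
  have dxy: "1 + x^k \<le> 1 + y^k" using x0 assms by (simp add: power_mono)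
  have "(y - a*\<theta>) / (1 + y^k) \<le> (y - a*\<theta>) / (1 + x^k)"
    using dx dxy assms by (intro divide_left_mono) auto
  moreover have "(y - a*\<theta>) / (1 + x^k) - (x - a*\<theta>) / (1 + x^k) = (y - x) / (1 + x^k)"
    by (simp add: diff_divide_distrib)
  moreover have "(y - x) / (1 + x^k) \<le> y - x" using dx assms
    by (simp add: divide_le_eq)
  ultimately show ?thesis using assms(4) unfolding gam_def by linarith
qed

theorem mainTheorem9:
  fixes k :: nat and a \<theta> lam :: real
  assumes "k \<ge> 2" and "a > 0" and "0 < \<theta>" and "\<theta> < 1" and "lam = a ^ k"
  shows "(\<forall>u\<in>{a * \<theta>..a}. gam k a \<theta> u \<in> {a * \<theta>..a})
    \<and> (\<exists>!\<xi>. \<xi> \<in> {a * \<theta><..<a} \<and> gam k a \<theta> \<xi> = \<xi>)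
    \<and> (\<forall>\<xi>. \<xi> \<in> {a * \<theta><..<a} \<and> gam k a \<theta> \<xi> = \<xi> \<longrightarrow>
        (deriv (gam k a \<theta>) \<xi> < -1 \<longleftrightarrow>
          (\<theta> < (real k - 1) / (real k + 1) \<and>
           lam > 1 / (real k - 1 - (real k + 1) * \<theta>) * ((real k + 1) / real k) ^ k)))"
proof (intro conjI)
  show "\<forall>u\<in>{a * \<theta>..a}. gam k a \<theta> u \<in> {a * \<theta>..a}"
    using gam_range assms by blast
  define g where "g = (\<lambda>u. gam k a \<theta> u - u)"
  have aa: "a * \<theta> < a" using assms by simp
  have at0: "a * \<theta> > 0" using assms by simp
  have ga: "g (a*\<theta>) > 0" unfolding g_def gam_def using assms by (simp add: algebra_simps)
  have gb: "g a < 0"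
  proof -
    have "1 + a^k > 1" using assms by simp
    then have "(a - a*\<theta>) / (1 + a^k) < a - a*\<theta>" using aa
      by (simp add: divide_less_eq)
    then show ?thesis unfolding g_def gam_def by (simp add: algebra_simps)
  qed
  have cont: "\<forall>x. a*\<theta> \<le> x \<and> x \<le> a \<longrightarrow> isCont g x"
  proof (intro allI impI)
    fix x assume "a*\<theta> \<le> x \<and> x \<le> a"
    then have "x > 0" using at0 by linarith
    then have "1 + x^k \<noteq> 0" by (smt (verit) zero_le_power)
    then show "isCont g x" unfolding g_def gam_def by (intro continuous_intros) auto
  qed
  obtain x where x: "a*\<theta> \<le> x" "x \<le> a" "g x = 0"
    using IVT2[of g a 0 "a*\<theta>"] gb ga aa cont by auto
  have xin: "x \<in> {a*\<theta><..<a}" using x ga gb by (auto simp: less_le)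
  have uniq: "y = x" if "y \<in> {a*\<theta><..<a}" "g y = 0" for y
  proof (rule ccontr)
    assume "y \<noteq> x"
    then consider "x < y" | "y < x" by linarith
    then show False
    proof cases
      case 1 then show False using gam_decr[of a \<theta> x y k] assms x that unfolding g_def by auto
    next
      case 2 then show False using gam_decr[of a \<theta> y x k] assms x that unfolding g_def by auto
    qed
  qed
  show "\<exists>!\<xi>. \<xi> \<in> {a * \<theta><..<a} \<and> gam k a \<theta> \<xi> = \<xi>"
  proof (rule ex1I[of _ x])
    show "x \<in> {a * \<theta><..<a} \<and> gam k a \<theta> x = x" using xin x(3) unfolding g_def by simp
  next
    fix y assume "y \<in> {a * \<theta><..<a} \<and> gam k a \<theta> y = y"
    then show "y = x" using uniq[of y] unfolding g_def by simp
  qed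
  show "\<forall>\<xi>. \<xi> \<in> {a * \<theta><..<a} \<and> gam k a \<theta> \<xi> = \<xi> \<longrightarrow>
        (deriv (gam k a \<theta>) \<xi> < -1 \<longleftrightarrow>
          (\<theta> < (real k - 1) / (real k + 1) \<and>
           lam > 1 / (real k - 1 - (real k + 1) * \<theta>) * ((real k + 1) / real k) ^ k))"
  proof (intro allI impI)
    fix \<xi> assume H: "\<xi> \<in> {a * \<theta><..<a} \<and> gam k a \<theta> \<xi> = \<xi>"
    define s where "s = \<xi>^k"
    define c where "c = real k - 1 - (real k + 1) * \<theta>"
    define D where "D = 1 + (1+\<theta>) * s"
    define E where "E = (\<xi> - a*\<theta>) * (real k * \<xi>^(k-1))"
    have xi0: "\<xi> > 0" using H at0 by auto
    have s0: "s > 0" using xi0 s_def by simp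
    have "(1+\<theta>) * s > 0" using s0 assms by simp
    then have D0: "D > 0" unfolding D_def by simp
    have fp: "\<xi> - a*\<theta> = (2*\<xi> - a*(1+\<theta>)) * (1 + s)"
    proof -
      have n: "1 + s \<noteq> 0" using s0 by simp
      have "(\<xi> - a*\<theta>) / (1 + s) = 2*\<xi> - a*(1+\<theta>)" using H unfolding gam_def s_def by linarith
      then show ?thesis using n by (simp add: divide_eq_eq)
    qed
    have aD: "a * D = \<xi> * (1 + 2* s)" using fp unfolding D_def by (simp add: algebra_simps)
    have xD: "(\<xi> - a*\<theta>) * D = \<xi> * (1-\<theta>) * (1+s)"
    proof -
      have "(\<xi> - a*\<theta>) * D = \<xi> * D - \<theta> * (a * D)" by (simp add: algebra_simps)
      also have "\<dots> = \<xi> * (1-\<theta>) * (1+s)" by (subst aD) (simp add: D_def algebra_simps)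
      finally show ?thesis .
    qed
    have sk: "Suc (k-1) = k" using assms by simp
    have xs: "\<xi> * \<xi>^(k-1) = s" unfolding s_def
    proof -
      have "\<xi> * \<xi>^(k-1) = \<xi>^Suc(k-1)" by simp
      then show "\<xi> * \<xi>^(k-1) = \<xi>^k" using sk by simp
    qed
    have xE: "\<xi> * E = (\<xi> - a*\<theta>) * real k * s"
    proof -
      have "\<xi> * E = (\<xi> - a*\<theta>) * real k * (\<xi> * \<xi>^(k-1))" unfolding E_def by (simp add: mult_ac)
      then show ?thesis by (simp only: xs)
    qed
    have dv: "deriv (gam k a \<theta>) \<xi> = -1 + ((1 + s) - E) / (1 + s)^2"
      unfolding s_def E_def by (rule DERIV_imp_deriv[OF gam_deriv[OF xi0]])
    have step1: "deriv (gam k a \<theta>) \<xi> < -1 \<longleftrightarrow> 1 + s < E"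
      unfolding dv using s0 by (simp add: divide_less_0_iff)
    have step2: "1 + s < E \<longleftrightarrow> 1 < s * c"
    proof -
      have "1 + s < E \<longleftrightarrow> \<xi> * D * (1 + s) < \<xi> * D * E"
        using xi0 D0 by simp
      also have "\<xi> * D * E = \<xi> * (1+s) * (real k * s * (1-\<theta>))"
      proof -
        have "\<xi> * D * E = D * (\<xi> * E)" by (simp add: mult_ac)
        also have "\<dots> = ((\<xi> - a*\<theta>) * D) * real k * s" unfolding xE by (simp add: mult_ac)
        also have "\<dots> = \<xi> * (1+s) * (real k * s * (1-\<theta>))" unfolding xD by (simp add: mult_ac)
        finally show ?thesis .
      qed
      also have "\<xi> * D * (1 + s) < \<xi> * (1+s) * (real k * s * (1-\<theta>)) \<longleftrightarrow> D < real k * s * (1-\<theta>)"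
      proof -
        have P: "\<xi> * (1+s) > 0" using xi0 s0 by simp
        have eq: "\<xi> * D * (1 + s) = (\<xi> * (1+s)) * D" by (simp add: mult_ac)
        show ?thesis unfolding eq by (rule mult_less_cancel_left_pos[OF P])
      qed
      also have "\<dots> \<longleftrightarrow> 1 < s * c" unfolding D_def c_def by (simp add: algebra_simps)
      finally show ?thesis .
    qed
    have cth: "\<theta> < (real k - 1) / (real k + 1) \<longleftrightarrow> c > 0"
      unfolding c_def by (simp add: less_divide_eq algebra_simps)
    show "deriv (gam k a \<theta>) \<xi> < -1 \<longleftrightarrow>
          (\<theta> < (real k - 1) / (real k + 1) \<and>
           lam > 1 / (real k - 1 - (real k + 1) * \<theta>) * ((real k + 1) / real k) ^ k)"
    proof (cases "c > 0")
      case False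
      then have "\<not> 1 < s * c" using s0 by (smt (verit) mult_pos_neg mult_nonneg_nonpos)
      then show ?thesis using step1 step2 cth False by simp
    next
      case True
      have k0: "k > 0" using assms by simp
      define x0 where "x0 = root k (1/c)"
      have x00: "x0 > 0" unfolding x0_def using True k0 by simp
      have x0k: "x0^k = 1/c" unfolding x0_def using True k0 by simp
      define phi where "phi = (\<lambda>x::real. x * (1 + 2*x^k) / (1 + (1+\<theta>)*x^k))"
      have aphi: "a = phi \<xi>" unfolding phi_def using aD D0 unfolding D_def s_def
        by (simp add: eq_divide_eq)
      have phix0: "phi x0 = x0 * ((real k + 1) / real k)"
      proof -
        have "phi x0 = x0 * (1 + 2/c) / (1 + (1+\<theta>)/c)" unfolding phi_def x0k by simp
        also have "\<dots> = x0 * (c + 2) / (c + 1 + \<theta>)" 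
        proof -
          have c0: "c \<noteq> 0" using True by simp
          have h: "c + 1 + \<theta> \<noteq> 0" using True assms(3) by simp
          have n: "1 + 2/c = (c+2)/c" using c0 by (simp add: field_simps)
          have d: "1 + (1+\<theta>)/c = (c+1+\<theta>)/c" using c0 by (simp add: field_simps)
          show ?thesis unfolding n d using c0 h by simp
        qed
        also have "c + 2 = (real k + 1) * (1 - \<theta>)" unfolding c_def by (simp add: algebra_simps)
        also have "c + 1 + \<theta> = real k * (1 - \<theta>)" unfolding c_def by (simp add: algebra_simps)
        finally have "phi x0 = x0 * ((real k + 1) * (1 - \<theta>)) / (real k * (1 - \<theta>))" .
        moreover have "1 - \<theta> \<noteq> 0" "real k \<noteq> 0" using assms k0 by auto
        ultimately show ?thesis by simp
      qed
      have "1 < s * c \<longleftrightarrow> x0^k < \<xi>^k" unfolding x0k s_def using True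
        by (simp add: divide_less_eq mult.commute)
      also have "\<dots> \<longleftrightarrow> x0 < \<xi>" using x00 xi0 k0
        by (meson less_imp_le power_less_imp_less_base power_strict_mono)
      also have "\<dots> \<longleftrightarrow> phi x0 < a"
      proof
        assume "x0 < \<xi>" then show "phi x0 < a" unfolding aphi phi_def
          using phi_mono[of x0 \<xi> \<theta> k] x00 assms k0 by simp
      next
        assume A: "phi x0 < a"
        show "x0 < \<xi>"
        proof (rule ccontr)
          assume "\<not> x0 < \<xi>"
          then have "\<xi> < x0 \<or> \<xi> = x0" by linarith
          then have "phi \<xi> \<le> phi x0" unfolding phi_def
            using phi_mono[of \<xi> x0 \<theta> k] xi0 assms k0 by auto
          then show False using A aphi by simp
        qed
      qed
      also have "\<dots> \<longleftrightarrow> (phi x0)^k < a^k"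
      proof -
        have "phi x0 > 0" unfolding phix0 using x00 k0 by simp
        then show ?thesis using assms k0
          by (meson less_imp_le power_less_imp_less_base power_strict_mono)
      qed
      also have "(phi x0)^k = 1 / c * ((real k + 1) / real k) ^ k"
        unfolding phix0 power_mult_distrib x0k ..
      finally show ?thesis using step1 step2 cth True assms(5) unfolding c_def by auto
    qed
  qed
qed

end
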